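(* Let $U$ be a $5$-unitrade with $|U|=12$. Then either $U=W\cup W'$ where $W,W'$ are disjoint $5$-unitrades each equivalent to $W_5$, or $U$ is equivalent to $S=\{\{1,2,3,5,6\}, \{1,2,4,5,6\}, \{1,3,4,5,6\}, \{2,3,4,5,6\}, \{1,2,3,5,7\}, \{1,2,4,5,7\}, \{1,3,4,5,7\}, \{2,3,4,5,7\}, \{1,2,3,6,7\}, \{1,2,4,6,7\}, \{1,3,4,6,7\}, \{2,3,4,6,7\}\}$.
   Context: A $k$-unitrade on a finite set $V$ is a set $U$ of $k$-element subsets (blocks) of $V$ such that every $(k-1)$-element subset of $V$ is contained in an even number of blocks of $U$. Two collections $U_1$ of subsets of $V_1$ and $U_2$ of subsets of $V_2$ are equivalent if there is an injection $f:V_1\to V_2$ with $U_2=\{f(u): u\in U_1\}$. $W_5$ denotes the set of all $5$-element subsets of a $6$-element set. *)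

theory Defs
  imports Main
begin

definition unitrade :: "nat \<Rightarrow> 'a set \<Rightarrow> 'a set set \<Rightarrow> bool" where
  "unitrade k V U \<longleftrightarrow> finite V \<and> (\<forall>b\<in>U. b \<subseteq> V \<and> card b = k) \<and>
     (\<forall>T. T \<subseteq> V \<longrightarrow> card T = k - 1 \<longrightarrow> even (card {b\<in>U. T \<subseteq> b}))"

definition equivalent :: "'a set \<Rightarrow> 'a set set \<Rightarrow> 'b set \<Rightarrow> 'b set set \<Rightarrow> bool" where
  "equivalent V1 U1 V2 U2 \<longleftrightarrow>
     (\<exists>f. inj_on f V1 \<and> f ` V1 \<subseteq> V2 \<and> U2 = (\<lambda>u. f ` u) ` U1)"

definition W5 :: "nat set set" where
  "W5 = {b. b \<subseteq> {1..6} \<and> card b = 5}"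

definition S_trade :: "nat set set" where
  "S_trade = {{1,2,3,5,6}, {1,2,4,5,6}, {1,3,4,5,6}, {2,3,4,5,6},
              {1,2,3,5,7}, {1,2,4,5,7}, {1,3,4,5,7}, {2,3,4,5,7},
              {1,2,3,6,7}, {1,2,4,6,7}, {1,3,4,6,7}, {2,3,4,6,7}}"

end

theory Submission
  imports Defs
begin

definition ksub :: "nat \<Rightarrow> 'a set \<Rightarrow> 'a set set" where
  "ksub k A = {b. b \<subseteq> A \<and> card b = k}"
definition cnt :: "'a set set \<Rightarrow> 'a set \<Rightarrow> nat" where
  "cnt U T = card {b\<in>U. T \<subseteq> b}"
definition der :: "'a set set \<Rightarrow> 'a \<Rightarrow> 'a set set" where
  "der U x = (\<lambda>b. b - {x}) ` {b\<in>U. x\<in>b}"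
definition res :: "'a set set \<Rightarrow> 'a \<Rightarrow> 'a set set" where
  "res U x = {b\<in>U. x\<notin>b}"

lemma unitrade_finite: "unitrade k V U \<Longrightarrow> finite U"
  unfolding unitrade_def
  by (meson PowI finite_Pow_iff rev_finite_subset subsetI)

lemma unitrade_blk: "unitrade k V U \<Longrightarrow> b \<in> U \<Longrightarrow> b \<subseteq> V \<and> card b = k"
  unfolding unitrade_def by blast

lemma unitrade_par: "unitrade k V U \<Longrightarrow> T \<subseteq> V \<Longrightarrow> card T = k - 1 \<Longrightarrow> even (cnt U T)"
  unfolding unitrade_def cnt_def by blast

lemma unitradeI: "finite V \<Longrightarrow> (\<And>b. b\<in>U \<Longrightarrow> b \<subseteq> V \<and> card b = k) \<Longrightarrow>
   (\<And>T. T \<subseteq> V \<Longrightarrow> card T = k - 1 \<Longrightarrow> even (cnt U T)) \<Longrightarrow> unitrade k V U"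
  unfolding unitrade_def cnt_def by blast

lemma unitrade_finV: "unitrade k V U \<Longrightarrow> finite V"
  unfolding unitrade_def by blast

lemma inj_der: "inj_on (\<lambda>b. b - {x}) {b. x \<in> b}"
  by (rule inj_onI) (metis CollectD insert_Diff)

lemma card_der: "finite U \<Longrightarrow> card (der U x) = card {b\<in>U. x\<in>b}"
  unfolding der_def
  by (rule card_image, rule inj_on_subset[OF inj_der]) auto

lemma card_split: "finite U \<Longrightarrow> card U = card {b\<in>U. x\<in>b} + card (res U x)"
proof -
  assume f: "finite U"
  have "U = {b\<in>U. x\<in>b} \<union> res U x" unfolding res_def by auto
  moreover have "{b\<in>U. x\<in>b} \<inter> res U x = {}" unfolding res_def by auto
  ultimately show ?thesis using f
    by (metis (no_types, lifting) card_Un_disjoint finite_Un)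
qed

lemma in_U_from_der: "x \<in> b \<Longrightarrow> b = insert x (b - {x})" by auto

lemma ins_der: "insert x ` der U x = {b\<in>U. x\<in>b}"
proof -
  have "insert x ` der U x = (\<lambda>b. insert x (b - {x})) ` {b\<in>U. x\<in>b}"
    unfolding der_def image_image ..
  also have "\<dots> = (\<lambda>b. b) ` {b\<in>U. x\<in>b}" by (rule image_cong) auto
  finally show ?thesis by simp
qed

lemma U_decomp: "U = res U x \<union> insert x ` der U x"
  unfolding ins_der res_def by auto

lemma der_unitrade:
  assumes u: "unitrade (Suc (Suc k)) V U" and x: "x \<in> V"
  shows "unitrade (Suc k) V (der U x)"
proof (rule unitradeI)
  show "finite V" using u unitrade_finV by blast
  fix c assume "c \<in> der U x"
  then obtain b where b: "b \<in> U" "x \<in> b" "c = b - {x}" unfolding der_def by auto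
  then show "c \<subseteq> V \<and> card c = Suc k" using unitrade_blk[OF u b(1)]
  proof -
    have "b \<subseteq> V" "card b = Suc (Suc k)" using unitrade_blk[OF u b(1)] by auto
    then show ?thesis using b by (simp add: card_Diff_singleton_if) blast
  qed
next
  fix T assume T: "T \<subseteq> V" "card T = Suc k - 1"
  show "even (cnt (der U x) T)"
  proof (cases "x \<in> T")
    case True
    then have e: "{c\<in>der U x. T \<subseteq> c} = {}" unfolding der_def by auto
    show ?thesis unfolding cnt_def e by simp
  next
    case False
    have fin: "finite T" using T unitrade_finV[OF u] finite_subset by blast
    have "{c\<in>der U x. T \<subseteq> c} = (\<lambda>b. b - {x}) ` {b\<in>U. insert x T \<subseteq> b}"
      unfolding der_def using False by auto
    moreover have "card ((\<lambda>b. b - {x}) ` {b\<in>U. insert x T \<subseteq> b}) = card {b\<in>U. insert x T \<subseteq> b}"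
      by (rule card_image, rule inj_on_subset[OF inj_der]) auto
    moreover have "even (cnt U (insert x T))"
      apply (rule unitrade_par[OF u])
      using T x False fin by auto
    ultimately show ?thesis unfolding cnt_def by simp
  qed
qed


lemma ins_der_iff: "x \<notin> T \<Longrightarrow> T \<in> der U x \<longleftrightarrow> insert x T \<in> U"
proof
  assume "x \<notin> T" "T \<in> der U x"
  then obtain b where "b \<in> U" "x \<in> b" "T = b - {x}" unfolding der_def by auto
  then show "insert x T \<in> U" by (simp add: insert_absorb)
next
  assume a: "x \<notin> T" "insert x T \<in> U"
  then have "T = insert x T - {x}" by simp
  then show "T \<in> der U x" unfolding der_def using a by blast
qed

lemma res_bd:
  assumes u: "unitrade (Suc k) V U" and T: "T \<subseteq> V" "card T = k" and x: "x \<notin> T" "x \<in> V"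
  shows "odd (cnt (res U x) T) \<longleftrightarrow> T \<in> der U x"
proof -
  have fV: "finite V" using unitrade_finV[OF u] .
  have fU: "finite U" using unitrade_finite[OF u] .
  have fT: "finite T" using T fV finite_subset by blast
  have split: "{b\<in>U. T\<subseteq>b} = {b\<in>res U x. T \<subseteq> b} \<union> {b\<in>U. insert x T \<subseteq> b}"
    unfolding res_def by auto
  have disj: "{b\<in>res U x. T \<subseteq> b} \<inter> {b\<in>U. insert x T \<subseteq> b} = {}"
    unfolding res_def by auto
  have one: "{b\<in>U. insert x T \<subseteq> b} = (if insert x T \<in> U then {insert x T} else {})"
  proof -
    have eqb: "b = insert x T" if "b \<in> U" "insert x T \<subseteq> b" for b
    proof -
      have "card b = Suc k" "b \<subseteq> V" using unitrade_blk[OF u that(1)] by auto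
      then have "finite b" using fV finite_subset by blast
      moreover have "card (insert x T) = Suc k" using fT x T by simp
      ultimately show ?thesis using that \<open>card b = Suc k\<close> card_subset_eq[of b "insert x T"] by simp
    qed
    show ?thesis
    proof (cases "insert x T \<in> U")
      case True
      have "{b\<in>U. insert x T \<subseteq> b} = {insert x T}"
      proof (rule set_eqI)
        fix b show "b \<in> {b\<in>U. insert x T \<subseteq> b} \<longleftrightarrow> b \<in> {insert x T}"
          using eqb[of b] True by auto
      qed
      then show ?thesis using True by simp
    next
      case False
      have "{b\<in>U. insert x T \<subseteq> b} = {}"
      proof (rule set_eqI)
        fix b show "b \<in> {b\<in>U. insert x T \<subseteq> b} \<longleftrightarrow> b \<in> {}"
          using eqb[of b] False by auto
      qed
      then show ?thesis using False by simp
    qed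
  qed
  have ev: "even (cnt U T)" using unitrade_par[OF u T(1)] T(2) by simp
  have f1: "finite {b\<in>res U x. T \<subseteq> b}" using fU unfolding res_def by simp
  have f2: "finite {b\<in>U. insert x T \<subseteq> b}" using fU by simp
  have "cnt U T = cnt (res U x) T + card {b\<in>U. insert x T \<subseteq> b}"
    unfolding cnt_def split using card_Un_disjoint[OF f1 f2 disj] .
  also have "card {b\<in>U. insert x T \<subseteq> b} = (if T \<in> der U x then 1 else 0)"
    unfolding one ins_der_iff[OF x(1), of U] by simp
  finally have "cnt U T = cnt (res U x) T + (if T \<in> der U x then 1 else 0)" .
  then show ?thesis using ev by (cases "T \<in> der U x") auto
qed

lemma cnt_res_in: "x \<in> T \<Longrightarrow> cnt (res U x) T = 0"
proof -
  assume "x \<in> T"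
  then have "{b\<in>res U x. T \<subseteq> b} = {}" unfolding res_def by auto
  then show ?thesis unfolding cnt_def by (metis card.empty)
qed

lemma cnt_single: "cnt {A} T = (if T \<subseteq> A then 1 else 0)"
proof -
  have "{b\<in>{A}. T \<subseteq> b} = (if T \<subseteq> A then {A} else {})" by auto
  then show ?thesis unfolding cnt_def by simp
qed

lemma odd_cnt_ex: "odd (cnt Y T) \<Longrightarrow> \<exists>b\<in>Y. T \<subseteq> b"
  unfolding cnt_def by (metis (no_types, lifting) Collect_empty_eq card.empty even_zero)

lemma sd_unitrade:
  assumes fV: "finite V" and blk: "\<And>b. b\<in>Y1\<union>Y2 \<Longrightarrow> b \<subseteq> V \<and> card b = k"
    and f1: "finite Y1" and f2: "finite Y2"
    and par: "\<And>T. T \<subseteq> V \<Longrightarrow> card T = k-1 \<Longrightarrow> (odd (cnt Y1 T) \<longleftrightarrow> odd (cnt Y2 T))"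
  shows "unitrade k V ((Y1 - Y2) \<union> (Y2 - Y1))"
proof (rule unitradeI[OF fV])
  fix b assume "b \<in> (Y1 - Y2) \<union> (Y2 - Y1)" then show "b \<subseteq> V \<and> card b = k" using blk by auto
next
  fix T assume T: "T \<subseteq> V" "card T = k - 1"
  define F1 where "F1 = {b\<in>Y1. T\<subseteq>b}"
  define F2 where "F2 = {b\<in>Y2. T\<subseteq>b}"
  have ff: "finite F1" "finite F2" using f1 f2 unfolding F1_def F2_def by auto
  have e: "{b\<in>(Y1 - Y2) \<union> (Y2 - Y1). T\<subseteq>b} = (F1 - F2) \<union> (F2 - F1)"
    unfolding F1_def F2_def by auto
  have c: "card ((F1 - F2) \<union> (F2 - F1)) = card (F1 - F2) + card (F2 - F1)"
    by (rule card_Un_disjoint) (use ff in auto)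
  have c1: "card (F1 - F2) = card F1 - card (F1 \<inter> F2)"
    using ff by (simp add: card_Diff_subset_Int)
  have c2: "card (F2 - F1) = card F2 - card (F1 \<inter> F2)"
    using ff by (metis card_Diff_subset_Int finite_Int inf_commute)
  have le: "card (F1 \<inter> F2) \<le> card F1" "card (F1 \<inter> F2) \<le> card F2"
    using ff by (auto intro: card_mono)
  have p: "odd (card F1) \<longleftrightarrow> odd (card F2)" using par[OF T] unfolding cnt_def F1_def F2_def .
  show "even (cnt ((Y1 - Y2) \<union> (Y2 - Y1)) T)"
    unfolding cnt_def e c c1 c2 using le p by presburger
qed

lemma ksub_insert:
  assumes "finite A" "x \<notin> A"
  shows "ksub (Suc k) (insert x A) = ksub (Suc k) A \<union> insert x ` ksub k A"
proof
  show "ksub (Suc k) (insert x A) \<subseteq> ksub (Suc k) A \<union> insert x ` ksub k A"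
  proof
    fix b assume b: "b \<in> ksub (Suc k) (insert x A)"
    then have bb: "b \<subseteq> insert x A" "card b = Suc k" unfolding ksub_def by auto
    have fb: "finite b" using bb assms(1) finite_subset by blast
    show "b \<in> ksub (Suc k) A \<union> insert x ` ksub k A"
    proof (cases "x \<in> b")
      case True
      then have "b - {x} \<in> ksub k A" using bb fb unfolding ksub_def by auto
      moreover have "b = insert x (b - {x})" using True by auto
      ultimately show ?thesis by blast
    next
      case False
      then show ?thesis using bb unfolding ksub_def by auto
    qed
  qed
next
  show "ksub (Suc k) A \<union> insert x ` ksub k A \<subseteq> ksub (Suc k) (insert x A)"
  proof
    fix b assume "b \<in> ksub (Suc k) A \<union> insert x ` ksub k A"
    then show "b \<in> ksub (Suc k) (insert x A)"
    proof
      assume "b \<in> ksub (Suc k) A" then show ?thesis unfolding ksub_def by auto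
    next
      assume "b \<in> insert x ` ksub k A"
      then obtain c where c: "c \<subseteq> A" "card c = k" "b = insert x c" unfolding ksub_def by auto
      have "finite c" using c assms(1) finite_subset by blast
      moreover have "x \<notin> c" using c assms(2) by auto
      ultimately show ?thesis using c unfolding ksub_def by auto
    qed
  qed
qed

lemma ksub_self: "finite A \<Longrightarrow> ksub (card A) A = {A}"
proof -
  assume f: "finite A"
  show ?thesis unfolding ksub_def
  proof (rule set_eqI)
    fix b show "b \<in> {b. b \<subseteq> A \<and> card b = card A} \<longleftrightarrow> b \<in> {A}"
      using card_subset_eq[OF f, of b] by auto
  qed
qed

lemma card_ksub: "finite A \<Longrightarrow> card (ksub k A) = card A choose k"
  unfolding ksub_def by (rule n_subsets)

lemma finite_ksub: "finite A \<Longrightarrow> finite (ksub k A)"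
  unfolding ksub_def by auto

lemma ksub_unitrade:
  assumes fV: "finite V" and A: "A \<subseteq> V" "card A = Suc (Suc k)"
  shows "unitrade (Suc k) V (ksub (Suc k) A)"
proof (rule unitradeI[OF fV])
  fix b assume "b \<in> ksub (Suc k) A" then show "b \<subseteq> V \<and> card b = Suc k"
    using A unfolding ksub_def by auto
next
  fix T assume T: "T \<subseteq> V" "card T = Suc k - 1"
  have fA: "finite A" using A fV finite_subset by blast
  show "even (cnt (ksub (Suc k) A) T)"
  proof (cases "T \<subseteq> A")
    case False
    have e0: "{b\<in>ksub (Suc k) A. T \<subseteq> b} = {}" unfolding ksub_def using False by blast
    show ?thesis unfolding cnt_def e0 by simp
  next
    case True
    have e: "{b\<in>ksub (Suc k) A. T \<subseteq> b} = (\<lambda>a. A - {a}) ` (A - T)"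
    proof
      show "{b\<in>ksub (Suc k) A. T \<subseteq> b} \<subseteq> (\<lambda>a. A - {a}) ` (A - T)"
      proof
        fix b assume b: "b \<in> {b\<in>ksub (Suc k) A. T \<subseteq> b}"
        then have bb: "b \<subseteq> A" "card b = Suc k" "T \<subseteq> b" unfolding ksub_def by auto
        have "finite b" using bb(1) fA finite_subset by blast
        then have "card (A - b) = 1" using bb A card_Diff_subset[of b A] by simp
        then obtain a where a: "A - b = {a}" by (metis One_nat_def card_1_singleton_iff)
        have "b = A - (A - b)" using bb(1) by blast
        then have "b = A - {a}" using a by simp
        moreover have "a \<in> A - T" using a bb(3) by blast
        ultimately show "b \<in> (\<lambda>a. A - {a}) ` (A - T)" by (simp add: rev_image_eqI)
      qed
    next
      show "(\<lambda>a. A - {a}) ` (A - T) \<subseteq> {b\<in>ksub (Suc k) A. T \<subseteq> b}"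
      proof
        fix b assume "b \<in> (\<lambda>a. A - {a}) ` (A - T)"
        then obtain a where a: "a \<in> A" "a \<notin> T" "b = A - {a}" by blast
        have "card b = Suc k" using a A fA by simp
        moreover have "b \<subseteq> A" "T \<subseteq> b" using a True by auto
        ultimately show "b \<in> {b\<in>ksub (Suc k) A. T \<subseteq> b}" unfolding ksub_def by simp
      qed
    qed
    have inj: "inj_on (\<lambda>a. A - {a}) (A - T)"
    proof (rule inj_onI)
      fix a a' assume h: "a \<in> A - T" "a' \<in> A - T" "A - {a} = A - {a'}"
      show "a = a'"
      proof (rule ccontr)
        assume "a \<noteq> a'"
        then have "a \<in> A - {a'}" using h(1) by blast
        then show False using h(3) by blast
      qed
    qed
    have "finite T" using True fA finite_subset by blast
    then have "card (A - T) = 2" using True A T card_Diff_subset[of T A] by simp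
    then show ?thesis unfolding cnt_def e card_image[OF inj] by simp
  qed
qed

lemma ksub_image:
  assumes inj: "inj_on f A"
  shows "(image f) ` ksub k A = ksub k (f ` A)"
proof
  show "(image f) ` ksub k A \<subseteq> ksub k (f ` A)"
  proof
    fix c assume "c \<in> (image f) ` ksub k A"
    then obtain b where b0: "b \<in> ksub k A" "c = f ` b" by (rule imageE)
    then have b: "b \<subseteq> A" "card b = k" "c = f ` b" unfolding ksub_def by auto
    have "card c = k" using b card_image[OF inj_on_subset[OF inj b(1)]] by simp
    moreover have "c \<subseteq> f ` A" using b by (simp add: image_mono)
    ultimately show "c \<in> ksub k (f ` A)" unfolding ksub_def by simp
  qed
next
  show "ksub k (f ` A) \<subseteq> (image f) ` ksub k A"
  proof
    fix c assume c: "c \<in> ksub k (f ` A)"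
    define b where "b = {a\<in>A. f a \<in> c}"
    have cs: "c \<subseteq> f ` A" using c unfolding ksub_def by simp
    have fb: "f ` b = c"
    proof
      show "f ` b \<subseteq> c" unfolding b_def by auto
      show "c \<subseteq> f ` b"
      proof
        fix y assume "y \<in> c"
        then obtain a where "a \<in> A" "y = f a" using cs by auto
        then show "y \<in> f ` b" unfolding b_def using \<open>y \<in> c\<close> by auto
      qed
    qed
    have bA: "b \<subseteq> A" unfolding b_def by blast
    have "card b = card c" using fb card_image[OF inj_on_subset[OF inj bA]] by simp
    then have "b \<in> ksub k A" using c bA unfolding ksub_def by simp
    then show "c \<in> (image f) ` ksub k A" using fb by (metis imageI)
  qed
qed

lemma exists_mem_ksub:
  assumes fA: "finite A" and c2: "card A \<ge> 2" and aA: "a \<in> A"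
  shows "\<exists>T\<in>ksub (card A - 1) A. a \<in> T"
proof -
  have "A - {a} \<noteq> {}"
  proof
    assume "A - {a} = {}"
    then have "A \<subseteq> {a}" by blast
    then have "card A \<le> card {a}" by (rule card_mono[rotated]) simp
    then show False using c2 by simp
  qed
  then obtain y where y: "y \<in> A - {a}" by (meson ex_in_conv)
  have "A - {y} \<in> ksub (card A - 1) A" using y unfolding ksub_def by (simp add: card_Diff_singleton)
  moreover have "a \<in> A - {y}" using y aA by blast
  ultimately show ?thesis by (rule bexI[rotated])
qed

lemma der_notin: "T \<in> der U x \<Longrightarrow> x \<notin> T"
  unfolding der_def by auto

lemma res_notin: "b \<in> res U x \<Longrightarrow> x \<notin> b"
  unfolding res_def by auto

lemma res_sub: "res U x \<subseteq> U"
  unfolding res_def by auto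

lemma der_blk:
  assumes u: "unitrade (Suc k) V U" and T: "T \<in> der U x"
  shows "T \<subseteq> V \<and> card T = k \<and> x \<notin> T"
proof -
  obtain b where b: "b \<in> U" "x \<in> b" "T = b - {x}" using T unfolding der_def by auto
  have "b \<subseteq> V" "card b = Suc k" using unitrade_blk[OF u b(1)] by auto
  then show ?thesis using b by (auto simp: card_Diff_singleton)
qed

lemma der_sub_res:
  assumes u: "unitrade (Suc k) V U" and x: "x \<in> V" and T: "T \<in> der U x"
  shows "\<exists>b\<in>res U x. T \<subseteq> b"
proof -
  have "T \<subseteq> V" "card T = k" "x \<notin> T" using der_blk[OF u T] by auto
  then have "odd (cnt (res U x) T)" using res_bd[OF u _ _ _ x] T by blast
  then show ?thesis by (rule odd_cnt_ex)
qed

lemma ksub0: "finite A \<Longrightarrow> ksub 0 A = {{}}"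
  unfolding ksub_def by (auto, metis card_0_eq empty_iff finite_subset)

lemma der_ksub_notin:
  assumes D: "der U x = ksub (Suc k) A" and fA: "finite A" and cA: "card A = Suc (Suc k)"
  shows "x \<notin> A"
proof
  assume "x \<in> A"
  moreover have "card A \<ge> 2" using cA by simp
  ultimately obtain T where "T \<in> ksub (card A - 1) A" "x \<in> T"
    using exists_mem_ksub[OF fA] by blast
  then have "T \<in> der U x" using D cA by simp
  then show False using der_notin \<open>x \<in> T\<close> by metis
qed

lemma unitrade_card_pos:
  assumes u: "unitrade (Suc k) V U" and b: "b \<in> U"
  shows "\<exists>x. x \<in> b \<and> x \<in> V"
proof -
  have "b \<subseteq> V" "card b = Suc k" using unitrade_blk[OF u b] by auto
  then have "b \<noteq> {}" by auto
  then show ?thesis using \<open>b \<subseteq> V\<close> by blast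
qed

lemma min_unitrade:
  "unitrade (Suc k) V U \<Longrightarrow> U \<noteq> {} \<Longrightarrow>
     card U \<ge> k + 2 \<and> (card U = k + 2 \<longrightarrow> (\<exists>A. A \<subseteq> V \<and> card A = k + 2 \<and> U = ksub (Suc k) A))"
proof (induction k arbitrary: U)
  case 0
  have u: "unitrade (Suc 0) V U" using 0 by simp
  have fU: "finite U" using unitrade_finite[OF u] .
  have "even (cnt U {})" using unitrade_par[OF u] by simp
  moreover have "cnt U {} = card U" unfolding cnt_def by simp
  moreover have "card U \<noteq> 0" using fU 0 by simp
  ultimately have ge: "card U \<ge> 2" by presburger
  show ?case
  proof (intro conjI impI)
    show "card U \<ge> 0 + 2" using ge by simp
    assume "card U = 0 + 2"
    then have "card U = 2" by simp
    then obtain u1 u2 where uu: "U = {u1, u2}" "u1 \<noteq> u2" unfolding card_2_iff by blast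
    have "card u1 = 1" "card u2 = 1" "u1 \<subseteq> V" "u2 \<subseteq> V" using unitrade_blk[OF u] uu by auto
    from card_1_singleton_iff[THEN iffD1] \<open>card u1 = 1\<close> obtain a1 where a1: "u1 = {a1}" by auto
    from card_1_singleton_iff[THEN iffD1] \<open>card u2 = 1\<close> obtain a2 where a2: "u2 = {a2}" by auto
    note a = a1 a2
    have ne: "a1 \<noteq> a2" using a uu by auto
    have "ksub (Suc 0) (insert a1 {a2}) = ksub (Suc 0) {a2} \<union> insert a1 ` ksub 0 {a2}"
      by (rule ksub_insert) (use ne in auto)
    also have "ksub (Suc 0) {a2} = {{a2}}" using ksub_self[of "{a2}"] by simp
    also have "ksub 0 {a2} = {{}}" by (simp add: ksub0)
    finally have "ksub (Suc 0) {a1, a2} = U" using uu a by auto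
    moreover have "{a1, a2} \<subseteq> V" using a \<open>u1 \<subseteq> V\<close> \<open>u2 \<subseteq> V\<close> by auto
    moreover have "card {a1, a2} = 0 + 2" using ne by simp
    ultimately show "\<exists>A. A \<subseteq> V \<and> card A = 0 + 2 \<and> U = ksub (Suc 0) A" by metis
  qed
next
  case (Suc k)
  have u: "unitrade (Suc (Suc k)) V U" using Suc.prems by simp
  have fU: "finite U" using unitrade_finite[OF u] .
  have fV: "finite V" using unitrade_finV[OF u] .
  obtain b where b: "b \<in> U" using Suc.prems by blast
  obtain x where x: "x \<in> b" "x \<in> V" using unitrade_card_pos[OF u b] by blast
  define D where "D = der U x"
  have uD: "unitrade (Suc k) V D" unfolding D_def by (rule der_unitrade[OF u x(2)])
  have "b - {x} \<in> D" unfolding D_def der_def using b x by blast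
  then have Dne: "D \<noteq> {}" by blast
  from Suc.IH[OF uD Dne] have IH: "card D \<ge> k + 2"
     "card D = k + 2 \<longrightarrow> (\<exists>A. A \<subseteq> V \<and> card A = k + 2 \<and> D = ksub (Suc k) A)" by auto
  obtain C where C: "C \<in> res U x" using der_sub_res[OF u x(2) \<open>b - {x} \<in> D\<close>[unfolded D_def]] by blast
  have fres: "finite (res U x)" using fU res_sub finite_subset by metis
  have "res U x \<noteq> {}" using C by blast
  then have cr: "card (res U x) \<ge> 1" using fres by (simp add: Suc_leI card_gt_0_iff)
  have cU: "card U = card D + card (res U x)"
    unfolding D_def using card_split[OF fU, of x] card_der[OF fU, of x] by simp
  show ?case
  proof (intro conjI impI)
    show "card U \<ge> Suc k + 2" using cU IH(1) cr by simp
    assume eq: "card U = Suc k + 2"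
    then have cD: "card D = k + 2" and c1: "card (res U x) = 1" using cU IH(1) cr by auto
    obtain A where A: "A \<subseteq> V" "card A = k + 2" "D = ksub (Suc k) A" using IH(2) cD by blast
    have fA: "finite A" using finite_subset[OF A(1) fV] .
    have dA: "der U x = ksub (Suc k) A" using A(3) unfolding D_def .
    have cA: "card A = Suc (Suc k)" using A(2) by simp
    have xA: "x \<notin> A" using der_ksub_notin[OF dA fA cA] .
    have "card (res U x) = Suc 0" using c1 by simp
    from card_1_singleton_iff[THEN iffD1, OF this] obtain c where "res U x = {c}" by blast
    then have rC: "res U x = {C}" using C by simp
    have CU: "C \<in> U" using C unfolding res_def by simp
    have cC: "card C = Suc (Suc k)" "C \<subseteq> V" using unitrade_blk[OF u CU] by auto
    have fC: "finite C" using finite_subset[OF cC(2) fV] .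
    have AC: "A \<subseteq> C"
    proof
      fix a assume aA: "a \<in> A"
      have "card A \<ge> 2" using A(2) by simp
      then obtain T where T: "T \<in> ksub (card A - 1) A" "a \<in> T"
        using exists_mem_ksub[OF fA _ aA] by blast
      then have "T \<in> der U x" using A unfolding D_def by simp
      then obtain b' where "b' \<in> res U x" "T \<subseteq> b'" using der_sub_res[OF u x(2)] by blast
      then show "a \<in> C" using rC T(2) by auto
    qed
    have AeC: "A = C" using card_subset_eq[OF fC AC] cA cC by simp
    have "U = res U x \<union> insert x ` der U x" by (rule U_decomp)
    also have "\<dots> = {A} \<union> insert x ` ksub (Suc k) A" unfolding rC dA AeC ..
    also have "\<dots> = ksub (Suc (Suc k)) (insert x A)"
    proof -
      have "ksub (Suc (Suc k)) A = {A}" using ksub_self[OF fA] unfolding cA .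
      then show ?thesis using ksub_insert[OF fA xA, of "Suc k"] by simp
    qed
    finally have "U = ksub (Suc (Suc k)) (insert x A)" .
    moreover have "insert x A \<subseteq> V" using A(1) x by simp
    moreover have "card (insert x A) = Suc k + 2" using fA xA cA by simp
    ultimately show "\<exists>A. A \<subseteq> V \<and> card A = Suc k + 2 \<and> U = ksub (Suc (Suc k)) A" by blast
  qed
qed

lemma sd_step:
  assumes u: "unitrade (Suc (Suc k)) V U" and x: "x \<in> V"
    and dA: "der U x = ksub (Suc k) A" and AV: "A \<subseteq> V" and cA: "card A = Suc (Suc k)"
  shows "x \<notin> A \<and> unitrade (Suc (Suc k)) V ((res U x - {A}) \<union> ({A} - res U x))"
proof -
  have fV: "finite V" using unitrade_finV[OF u] .
  have fU: "finite U" using unitrade_finite[OF u] .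
  have fA: "finite A" using finite_subset[OF AV fV] .
  have xA: "x \<notin> A" using der_ksub_notin[OF dA fA cA] .
  have fres: "finite (res U x)" using finite_subset[OF res_sub fU] .
  have "unitrade (Suc (Suc k)) V ((res U x - {A}) \<union> ({A} - res U x))"
  proof (rule sd_unitrade[OF fV _ fres])
    fix b assume "b \<in> res U x \<union> {A}"
    then show "b \<subseteq> V \<and> card b = Suc (Suc k)"
    proof
      assume "b \<in> res U x"
      then have "b \<in> U" unfolding res_def by simp
      then show ?thesis using unitrade_blk[OF u] by blast
    next
      assume "b \<in> {A}" then show ?thesis using AV cA by simp
    qed
  next
    show "finite {A}" by simp
  next
    fix T assume T: "T \<subseteq> V" "card T = Suc (Suc k) - 1"
    show "odd (cnt (res U x) T) \<longleftrightarrow> odd (cnt {A} T)"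
    proof (cases "x \<in> T")
      case True
      then have "\<not> T \<subseteq> A" using xA by blast
      then show ?thesis using cnt_res_in[OF True] cnt_single[of A T] by simp
    next
      case False
      have cT: "card T = Suc k" using T(2) by simp
      have "odd (cnt (res U x) T) \<longleftrightarrow> T \<in> der U x" using res_bd[OF u T(1) cT False x] .
      also have "\<dots> \<longleftrightarrow> T \<subseteq> A" unfolding dA ksub_def using cT by simp
      also have "\<dots> \<longleftrightarrow> odd (cnt {A} T)" using cnt_single[of A T] by simp
      finally show ?thesis .
    qed
  qed
  then show ?thesis using xA by simp
qed

lemma res_single_der:
  assumes u: "unitrade (Suc k) V U" and x: "x \<in> V" and r: "res U x = {C}"
  shows "der U x \<subseteq> ksub k C"
proof
  fix T assume T: "T \<in> der U x"
  obtain b where "b \<in> res U x" "T \<subseteq> b" using der_sub_res[OF u x T] by blast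
  then have "T \<subseteq> C" using r by simp
  then show "T \<in> ksub k C" using der_blk[OF u T] unfolding ksub_def by simp
qed

lemma gap_unitrade:
  "unitrade (Suc k) V U \<Longrightarrow> U \<noteq> {} \<Longrightarrow> card U \<noteq> k + 2 \<Longrightarrow> card U \<ge> 2 * (k + 1)"
proof (induction k arbitrary: U)
  case 0
  then show ?case using min_unitrade[of 0 V U] by simp
next
  case (Suc k)
  have u: "unitrade (Suc (Suc k)) V U" using Suc.prems by simp
  have fU: "finite U" using unitrade_finite[OF u] .
  have fV: "finite V" using unitrade_finV[OF u] .
  have m1: "card U \<ge> Suc k + 2" using min_unitrade[OF Suc.prems(1,2)] by simp
  show ?case
  proof (rule ccontr)
    assume "\<not> ?thesis"
    then have lt: "card U < 2 * (Suc k + 1)" by simp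
    obtain b where b: "b \<in> U" using Suc.prems by blast
    obtain x where x: "x \<in> b" "x \<in> V" using unitrade_card_pos[OF u b] by blast
    define D where "D = der U x"
    have uD: "unitrade (Suc k) V D" unfolding D_def by (rule der_unitrade[OF u x(2)])
    have bD: "b - {x} \<in> der U x" unfolding der_def using b x by blast
    then have Dne: "D \<noteq> {}" unfolding D_def by blast
    obtain C where C: "C \<in> res U x" using der_sub_res[OF u x(2) bD] by blast
    have fres: "finite (res U x)" using finite_subset[OF res_sub fU] .
    have "res U x \<noteq> {}" using C by blast
    then have cr: "card (res U x) \<ge> 1" using fres by (simp add: Suc_leI card_gt_0_iff)
    have cU: "card U = card D + card (res U x)"
      unfolding D_def using card_split[OF fU, of x] card_der[OF fU, of x] by simp
    have fD: "finite D" using unitrade_finite[OF uD] .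
    show False
    proof (cases "card (res U x) = 1")
      case True
      have "card (res U x) = Suc 0" using True by simp
      from card_1_singleton_iff[THEN iffD1, OF this] obtain c where "res U x = {c}" by blast
      then have rC: "res U x = {C}" using C by simp
      have CU: "C \<in> U" using C unfolding res_def by simp
      have cC: "card C = Suc (Suc k)" "C \<subseteq> V" using unitrade_blk[OF u CU] by auto
      have fC: "finite C" using finite_subset[OF cC(2) fV] .
      have "D \<subseteq> ksub (Suc k) C" unfolding D_def by (rule res_single_der[OF u x(2) rC])
      then have "card D \<le> card (ksub (Suc k) C)" using card_mono[OF finite_ksub[OF fC]] by blast
      also have "\<dots> = Suc (Suc k)" using card_ksub[OF fC] cC(1) by simp
      finally show False using cU True m1 Suc.prems(3) by simp
    next
      case False
      then have e2: "card (res U x) \<ge> 2" using cr by simp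
      have dlt: "card D < 2 * (k + 1)" using cU e2 lt by simp
      have dk: "card D = k + 2" using Suc.IH[OF uD Dne] dlt by linarith
      obtain A where A: "A \<subseteq> V" "card A = k + 2" "D = ksub (Suc k) A"
        using min_unitrade[OF uD Dne] dk by blast
      have dA: "der U x = ksub (Suc k) A" using A(3) unfolding D_def .
      have cA: "card A = Suc (Suc k)" using A(2) by simp
      have sd: "unitrade (Suc (Suc k)) V ((res U x - {A}) \<union> ({A} - res U x))"
        using sd_step[OF u x(2) dA A(1) cA] by blast
      show False
      proof (cases "A \<in> res U x")
        case True
        have e: "(res U x - {A}) \<union> ({A} - res U x) = res U x - {A}" using True by blast
        have c: "card (res U x - {A}) = card (res U x) - 1" using True fres by simp
        have ne: "res U x - {A} \<noteq> {}"
        proof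
          assume h: "res U x - {A} = {}"
          have "card (res U x - {A}) = 0" unfolding h by simp
          then show False using c e2 by simp
        qed
        have "card (res U x - {A}) \<ge> Suc k + 2" using min_unitrade[OF sd[unfolded e] ne] by simp
        then show False using c cU dk lt by simp
      next
        case False
        have e: "(res U x - {A}) \<union> ({A} - res U x) = insert A (res U x)" using False by blast
        have c: "card (insert A (res U x)) = card (res U x) + 1" using False fres by simp
        have "card (insert A (res U x)) \<ge> Suc k + 2" using min_unitrade[OF sd[unfolded e]] by simp
        then show False using c cU dk lt by simp
      qed
    qed
  qed
qed

definition case1 :: "'a set \<Rightarrow> 'a set set \<Rightarrow> bool" where
  "case1 V U \<longleftrightarrow> (\<exists>W W'. unitrade 5 V W \<and> unitrade 5 V W' \<and> W \<inter> W' = {} \<and> U = W \<union> W' \<and>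
            equivalent {1..6} W5 V W \<and> equivalent {1..6} W5 V W')"

lemma W_equiv:
  assumes BV: "B \<subseteq> V" and cB: "card B = 6"
  shows "equivalent {1..6::nat} W5 V (ksub 5 B)"
proof -
  have fB: "finite B" using cB by (metis card.infinite zero_neq_numeral)
  have "card {1..6::nat} = card B" using cB by simp
  then obtain g where g: "bij_betw g {1..6::nat} B" using finite_same_card_bij[OF finite_atLeastAtMost fB] by blast
  have inj: "inj_on g {1..6}" and im: "g ` {1..6} = B" using g unfolding bij_betw_def by auto
  have "W5 = ksub 5 {1..6}" unfolding W5_def ksub_def by simp
  then have "(\<lambda>u. g ` u) ` W5 = ksub 5 B" using ksub_image[OF inj, of 5] im by simp
  then show ?thesis unfolding equivalent_def using inj im BV by blast
qed

lemma case1_intro: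
  assumes fV: "finite V" and B1: "B1 \<subseteq> V" "card B1 = 6" and B2: "B2 \<subseteq> V" "card B2 = 6"
    and disj: "ksub 5 B1 \<inter> ksub 5 B2 = {}" and U: "U = ksub 5 B1 \<union> ksub 5 B2"
  shows "case1 V U"
proof -
  have u1: "unitrade 5 V (ksub 5 B1)" using ksub_unitrade[OF fV B1(1), of 4] B1(2) by (simp add: eval_nat_numeral)
  have u2: "unitrade 5 V (ksub 5 B2)" using ksub_unitrade[OF fV B2(1), of 4] B2(2) by (simp add: eval_nat_numeral)
  show ?thesis unfolding case1_def
    using u1 u2 disj U W_equiv[OF B1] W_equiv[OF B2] by blast
qed

lemma ksub_ins_self:
  assumes fA: "finite A" and xA: "x \<notin> A" and cA: "card A = Suc k"
  shows "ksub (Suc k) (insert x A) = insert A (insert x ` ksub k A)"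
proof -
  have "ksub (Suc k) A = {A}" using ksub_self[OF fA] cA by simp
  then show ?thesis using ksub_insert[OF fA xA, of k] by simp
qed

lemma vertex:
  assumes u: "unitrade 5 V U" and c12: "card U = 12" and b: "b \<in> U" and x: "x \<in> b" "x \<in> V"
  shows "case1 V U \<or> card (res U x) = 3 \<or> card (res U x) = 4"
proof -
  have u': "unitrade (Suc (Suc 3)) V U" using u by (simp add: eval_nat_numeral)
  have fU: "finite U" using unitrade_finite[OF u] .
  have fV: "finite V" using unitrade_finV[OF u] .
  define D where "D = der U x"
  have uD: "unitrade (Suc 3) V D" unfolding D_def by (rule der_unitrade[OF u' x(2)])
  have bD: "b - {x} \<in> der U x" unfolding der_def using b x by blast
  then have Dne: "D \<noteq> {}" unfolding D_def by blast
  have fD: "finite D" using unitrade_finite[OF uD] .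
  obtain C where C: "C \<in> res U x" using der_sub_res[OF u' x(2) bD] by blast
  have fres: "finite (res U x)" using finite_subset[OF res_sub fU] .
  have "res U x \<noteq> {}" using C by blast
  then have cr: "card (res U x) \<ge> 1" using fres by (simp add: Suc_leI card_gt_0_iff)
  have cU: "card U = card D + card (res U x)"
    unfolding D_def using card_split[OF fU, of x] card_der[OF fU, of x] by simp
  have d5: "card D \<ge> 5" using min_unitrade[OF uD Dne] by simp
  have resblk: "C' \<subseteq> V \<and> card C' = 5 \<and> x \<notin> C'" if "C' \<in> res U x" for C'
    using that unitrade_blk[OF u] unfolding res_def by blast
  consider (e1) "card (res U x) = 1" | (e2) "card (res U x) = 2" | (e3) "card (res U x) \<ge> 3"
    using cr by linarith
  then show ?thesis
  proof cases
    case e1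
    have "card (res U x) = Suc 0" using e1 by simp
    from card_1_singleton_iff[THEN iffD1, OF this] obtain c where "res U x = {c}" by blast
    then have rC: "res U x = {C}" using C by simp
    have cC: "C \<subseteq> V" "card C = 5" using resblk[OF C] by auto
    have fC: "finite C" using finite_subset[OF cC(1) fV] .
    have "D \<subseteq> ksub 4 C" unfolding D_def using res_single_der[OF u' x(2) rC] by (simp add: eval_nat_numeral)
    then have "card D \<le> card (ksub 4 C)" using card_mono[OF finite_ksub[OF fC]] by blast
    also have "\<dots> = 5" using card_ksub[OF fC] cC(2) by (simp add: eval_nat_numeral)
    finally show ?thesis using cU e1 c12 by simp
  next
    case e2
    then obtain C1 C2 where rC: "res U x = {C1, C2}" "C1 \<noteq> C2" unfolding card_2_iff by blast
    have c1: "C1 \<subseteq> V" "card C1 = 5" "x \<notin> C1" using resblk[of C1] rC by auto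
    have c2: "C2 \<subseteq> V" "card C2 = 5" "x \<notin> C2" using resblk[of C2] rC by auto
    have f1: "finite C1" using finite_subset[OF c1(1) fV] .
    have f2: "finite C2" using finite_subset[OF c2(1) fV] .
    define K1 where "K1 = ksub 4 C1"
    define K2 where "K2 = ksub 4 C2"
    have fK: "finite K1" "finite K2" unfolding K1_def K2_def using finite_ksub f1 f2 by auto
    have cK: "card K1 = 5" "card K2 = 5" unfolding K1_def K2_def
      using card_ksub[OF f1] card_ksub[OF f2] c1(2) c2(2) by (simp_all add: eval_nat_numeral)
    have sub: "D \<subseteq> K1 \<union> K2"
    proof
      fix T assume T: "T \<in> D"
      obtain b' where "b' \<in> res U x" "T \<subseteq> b'" using der_sub_res[OF u' x(2) T[unfolded D_def]] by blast
      moreover have "card T = 4" using der_blk[OF u' T[unfolded D_def]] by simp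
      ultimately show "T \<in> K1 \<union> K2" unfolding K1_def K2_def ksub_def using rC by auto
    qed
    have cD: "card D = 10" using cU e2 c12 by simp
    have "card (K1 \<union> K2) \<le> 10" using card_Un_le[of K1 K2] cK by simp
    moreover have "card D \<le> card (K1 \<union> K2)" using card_mono[OF _ sub] fK by simp
    ultimately have cKU: "card (K1 \<union> K2) = 10" using cD by simp
    have DK: "D = K1 \<union> K2" using card_subset_eq[OF _ sub] fK cKU cD by simp
    have "card (K1 \<inter> K2) = 0" using card_Un_Int[OF fK] cK cKU by simp
    then have KI: "K1 \<inter> K2 = {}" using fK by simp
    have xK: "x \<notin> T" if "T \<in> K1 \<union> K2" for T using that c1(3) c2(3) unfolding K1_def K2_def ksub_def by blast
    have W1: "ksub 5 (insert x C1) = insert C1 (insert x ` K1)"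
      unfolding K1_def using ksub_ins_self[OF f1 c1(3), of 4] c1(2) by (simp add: eval_nat_numeral)
    have W2: "ksub 5 (insert x C2) = insert C2 (insert x ` K2)"
      unfolding K2_def using ksub_ins_self[OF f2 c2(3), of 4] c2(2) by (simp add: eval_nat_numeral)
    have "U = res U x \<union> insert x ` der U x" by (rule U_decomp)
    also have "\<dots> = ksub 5 (insert x C1) \<union> ksub 5 (insert x C2)"
      unfolding W1 W2 rC(1) D_def[symmetric] DK by auto
    finally have UU: "U = ksub 5 (insert x C1) \<union> ksub 5 (insert x C2)" .
    have disj: "ksub 5 (insert x C1) \<inter> ksub 5 (insert x C2) = {}"
    proof -
      have "insert C1 (insert x ` K1) \<inter> insert C2 (insert x ` K2) = {}"
      proof (rule ccontr)
        assume "\<not> ?thesis"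
        then obtain Z where Z1: "Z \<in> insert C1 (insert x ` K1)" and Z2: "Z \<in> insert C2 (insert x ` K2)" by blast
        show False
        proof (cases "x \<in> Z")
          case False
          then have "Z = C1" "Z = C2" using Z1 Z2 by auto
          then show False using rC(2) by simp
        next
          case True
          then have "Z \<noteq> C1" "Z \<noteq> C2" using c1(3) c2(3) by auto
          then obtain T1 T2 where "T1 \<in> K1" "T2 \<in> K2" "Z = insert x T1" "Z = insert x T2"
            using Z1 Z2 by auto
          moreover have "x \<notin> T1" "x \<notin> T2" using xK calculation by auto
          ultimately have "T1 = T2" by (metis Diff_insert_absorb)
          then show False using KI \<open>T1 \<in> K1\<close> \<open>T2 \<in> K2\<close> by blast
        qed
      qed
      then show ?thesis unfolding W1 W2 .
    qed
    have "case1 V U"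
      by (rule case1_intro[OF fV _ _ _ _ disj UU]) (use c1 c2 x f1 f2 in auto)
    then show ?thesis by simp
  next
    case e3
    have d9: "card D \<le> 9" using cU e3 c12 by simp
    show ?thesis
    proof (cases "card D = 5")
      case False
      have "card D \<noteq> 3 + 2" using False by simp
      then have "card D \<ge> 8" using gap_unitrade[OF uD Dne] by simp
      then show ?thesis using d9 cU c12 by auto
    next
      case True
      obtain A where A: "A \<subseteq> V" "card A = 3 + 2" "D = ksub (Suc 3) A"
        using min_unitrade[OF uD Dne] True by auto
      have dA: "der U x = ksub (Suc 3) A" using A(3) unfolding D_def .
      have cA: "card A = Suc (Suc 3)" using A(2) by simp
      have fA: "finite A" using finite_subset[OF A(1) fV] .
      have sd: "x \<notin> A" "unitrade (Suc (Suc 3)) V ((res U x - {A}) \<union> ({A} - res U x))"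
        using sd_step[OF u' x(2) dA A(1) cA] by auto
      have ce: "card (res U x) = 7" using cU True c12 by simp
      show ?thesis
      proof (cases "A \<in> res U x")
        case False
        have e: "(res U x - {A}) \<union> ({A} - res U x) = insert A (res U x)" using False by blast
        have c: "card (insert A (res U x)) = 8" using False fres ce by simp
        have "card (insert A (res U x)) \<ge> 2 * (4 + 1)"
          using gap_unitrade[of 4 V "insert A (res U x)"] sd(2)[unfolded e] c by simp
        then show ?thesis using c by simp
      next
        case True
        define R where "R = res U x - {A}"
        have e: "(res U x - {A}) \<union> ({A} - res U x) = R" using True unfolding R_def by blast
        have cR: "card R = 6" unfolding R_def using True fres ce by simp
        have uR: "unitrade (Suc 4) V R" using sd(2)[unfolded e] by (simp add: eval_nat_numeral)
        have Rne: "R \<noteq> {}" using cR by auto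
        obtain B where B: "B \<subseteq> V" "card B = 4 + 2" "R = ksub (Suc 4) B"
          using min_unitrade[OF uR Rne] cR by auto
        have W1: "ksub 5 (insert x A) = insert A (insert x ` D)"
          using ksub_ins_self[OF fA sd(1), of 4] cA A(3) by (simp add: eval_nat_numeral)
        have "U = res U x \<union> insert x ` der U x" by (rule U_decomp)
        also have "\<dots> = ksub 5 (insert x A) \<union> ksub 5 B"
          unfolding W1 D_def[symmetric] using True B(3) unfolding R_def by (auto simp: eval_nat_numeral)
        finally have UU: "U = ksub 5 (insert x A) \<union> ksub 5 B" .
        have disj: "ksub 5 (insert x A) \<inter> ksub 5 B = {}"
        proof -
          have "ksub 5 B = R" using B(3) by (simp add: eval_nat_numeral)
          moreover have "Z \<notin> R" if "Z \<in> insert A (insert x ` D)" for Z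
          proof -
            have "Z = A \<or> x \<in> Z" using that by auto
            then show ?thesis unfolding R_def res_def by auto
          qed
          ultimately show ?thesis unfolding W1 by blast
        qed
        have "case1 V U"
          by (rule case1_intro[OF fV _ _ _ _ disj UU]) (use A B sd(1) fA x in auto)
        then show ?thesis by simp
      qed
    qed
  qed
qed

lemma dbl:
  assumes fU: "finite U" and fN: "finite N" and sub: "\<And>b. b \<in> U \<Longrightarrow> b \<subseteq> N"
  shows "(\<Sum>x\<in>N. card {b\<in>U. x\<in>b}) = (\<Sum>b\<in>U. card b)"
proof -
  have "(\<Sum>x\<in>N. card {b\<in>U. x\<in>b}) = (\<Sum>x\<in>N. \<Sum>b\<in>U. (if x \<in> b then 1 else 0::nat))"
  proof (rule sum.cong)
    fix x show "card {b\<in>U. x\<in>b} = (\<Sum>b\<in>U. (if x \<in> b then 1 else 0::nat))"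
      by (subst card_eq_sum) (rule sum.inter_filter[OF fU])
  qed simp
  also have "\<dots> = (\<Sum>b\<in>U. \<Sum>x\<in>N. (if x \<in> b then 1 else 0::nat))" by (rule sum.swap)
  also have "\<dots> = (\<Sum>b\<in>U. card b)"
  proof (rule sum.cong)
    fix b assume b: "b \<in> U"
    have "(\<Sum>x\<in>N. (if x \<in> b then 1 else 0::nat)) = card {x\<in>N. x \<in> b}"
      by (subst card_eq_sum) (rule sum.inter_filter[OF fN, symmetric])
    also have "{x\<in>N. x \<in> b} = b" using sub[OF b] by blast
    finally show "(\<Sum>x\<in>N. (if x \<in> b then 1 else 0::nat)) = card b" .
  qed simp
  finally show ?thesis .
qed

lemma card3_ind:
  assumes "X \<noteq> Y" "X \<noteq> Z" "Y \<noteq> Z"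
  shows "card ({X, Y, Z} \<inter> U) = (if X \<in> U then 1 else 0) + (if Y \<in> U then 1 else 0) + (if Z \<in> U then 1 else (0::nat))"
proof -
  have e: "{X, Y, Z} \<inter> U = {s\<in>{X,Y,Z}. s \<in> U}" by blast
  have "card ({X, Y, Z} \<inter> U) = (\<Sum>s\<in>{X,Y,Z}. if s \<in> U then 1 else (0::nat))"
    unfolding e
    by (subst card_eq_sum) (rule sum.inter_filter, simp)
  also have "\<dots> = (if X \<in> U then 1 else 0) + (if Y \<in> U then 1 else 0) + (if Z \<in> U then 1 else (0::nat))"
    using assms by (simp add: sum.insert)
  finally show ?thesis .
qed

lemma graph_part:
  assumes u: "unitrade 5 V U" and NU: "N = \<Union>U" and cN: "card N = 7"
    and PN: "P \<subseteq> N" and cP: "card P = 4"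
    and rP: "\<And>x. x \<in> P \<Longrightarrow> card (res U x) = 3"
    and rQ: "\<And>x. x \<in> N - P \<Longrightarrow> card (res U x) = 4"
  shows "U = (\<lambda>(p,q). N - {p,q}) ` (P \<times> (N - P))"
proof -
  have fV: "finite V" using unitrade_finV[OF u] .
  have fU: "finite U" using unitrade_finite[OF u] .
  have fN: "finite N" using cN by (metis card.infinite zero_neq_numeral)
  have blk: "b \<subseteq> N \<and> card b = 5" if "b \<in> U" for b
    using unitrade_blk[OF u that] that NU by blast
  have NV: "N \<subseteq> V" using NU unitrade_blk[OF u] by blast
  have cNb: "card (N - b) = 2" if "b \<in> U" for b
  proof -
    have "finite b" using finite_subset[OF conjunct1[OF blk[OF that]] fN] .
    then show ?thesis using card_Diff_subset[of b N] blk[OF that] cN by simp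
  qed
  have N_b: "N - (N - b) = b" if "b \<in> U" for b using blk[OF that] by blast
  have F1: "(N - {v,w} \<in> U) \<longleftrightarrow> \<not> ((N - {u,v} \<in> U) \<longleftrightarrow> (N - {u,w} \<in> U))"
    if uvw: "u \<in> N" "v \<in> N" "w \<in> N" "u \<noteq> v" "u \<noteq> w" "v \<noteq> w" for u v w
  proof -
    define T where "T = N - {u,v,w}"
    have cT: "card T = 4" unfolding T_def using uvw cN card_Diff_subset[of "{u,v,w}" N] by simp
    have TV: "T \<subseteq> V" unfolding T_def using NV by blast
    have ev: "even (cnt U T)" using unitrade_par[OF u TV] cT by simp
    have eX: "insert u T = N - {v,w}" "insert v T = N - {u,w}" "insert w T = N - {u,v}"
      unfolding T_def using uvw by auto
    have "{b\<in>U. T \<subseteq> b} = {N - {v,w}, N - {u,w}, N - {u,v}} \<inter> U"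
    proof (rule set_eqI, rule iffI)
      fix b assume "b \<in> {b\<in>U. T \<subseteq> b}"
      then have b: "b \<in> U" "T \<subseteq> b" by auto
      have fb: "finite b" using finite_subset[OF conjunct1[OF blk[OF b(1)]] fN] .
      have fT: "finite T" using finite_subset[OF b(2) fb] .
      have "card (b - T) = 1" using card_Diff_subset[OF fT b(2)] blk[OF b(1)] cT by simp
      then obtain y where y: "b - T = {y}" by (metis One_nat_def card_1_singleton_iff)
      have bb: "b = insert y T" using y b(2) by blast
      have "y \<in> N" "y \<notin> T" using y blk[OF b(1)] by auto
      then have "y = u \<or> y = v \<or> y = w" unfolding T_def by simp
      then have "b = N - {v,w} \<or> b = N - {u,w} \<or> b = N - {u,v}" using bb eX by (elim disjE) simp_all
      then have "b \<in> {N - {v,w}, N - {u,w}, N - {u,v}}" by simp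
      then show "b \<in> {N - {v,w}, N - {u,w}, N - {u,v}} \<inter> U" using b(1) by simp
    next
      fix b assume b: "b \<in> {N - {v,w}, N - {u,w}, N - {u,v}} \<inter> U"
      then have "T \<subseteq> b" unfolding T_def by auto
      then show "b \<in> {b\<in>U. T \<subseteq> b}" using b by simp
    qed
    moreover have n1: "N - {v,w} \<noteq> N - {u,w}" "N - {v,w} \<noteq> N - {u,v}" "N - {u,w} \<noteq> N - {u,v}"
      using uvw by blast+
    ultimately have "cnt U T = (if N - {v,w} \<in> U then 1 else 0) + (if N - {u,w} \<in> U then 1 else 0)
        + (if N - {u,v} \<in> U then 1 else 0)"
      unfolding cnt_def using card3_ind[OF n1, of U] by simp
    then show ?thesis using ev by (auto split: if_splits)
  qed
  have F2: "card (res U v) = card {w\<in>N. w \<noteq> v \<and> N - {v,w} \<in> U}" if vN: "v \<in> N" for v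
  proof -
    have e: "res U v = (\<lambda>w. N - {v,w}) ` {w\<in>N. w \<noteq> v \<and> N - {v,w} \<in> U}"
    proof (rule set_eqI, rule iffI)
      fix b assume "b \<in> res U v"
      then have b: "b \<in> U" "v \<notin> b" unfolding res_def by auto
      have "finite (N - b)" using fN by simp
      have "card (N - b - {v}) = 1" using cNb[OF b(1)] b(2) vN by (simp add: card_Diff_singleton)
      then obtain w where w: "N - b - {v} = {w}" by (metis One_nat_def card_1_singleton_iff)
      have Nb: "N - b = {v, w}" using w b(2) vN by blast
      have wN: "w \<in> N" "w \<noteq> v" using w by auto
      have "b = N - {v,w}" using N_b[OF b(1)] Nb by simp
      then show "b \<in> (\<lambda>w. N - {v,w}) ` {w\<in>N. w \<noteq> v \<and> N - {v,w} \<in> U}"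
        using wN b(1) by (simp add: rev_image_eqI)
    next
      fix b assume "b \<in> (\<lambda>w. N - {v,w}) ` {w\<in>N. w \<noteq> v \<and> N - {v,w} \<in> U}"
      then obtain w where "b = N - {v,w}" "N - {v,w} \<in> U" by blast
      then show "b \<in> res U v" unfolding res_def by simp
    qed
    have inj: "inj_on (\<lambda>w. N - {v,w}) {w\<in>N. w \<noteq> v \<and> N - {v,w} \<in> U}"
    proof (rule inj_onI)
      fix w w' assume h: "w \<in> {w\<in>N. w \<noteq> v \<and> N - {v,w} \<in> U}" "w' \<in> {w\<in>N. w \<noteq> v \<and> N - {v,w} \<in> U}"
        "N - {v,w} = N - {v,w'}"
      show "w = w'"
      proof (rule ccontr)
        assume "w \<noteq> w'"
        then have "w \<in> N - {v,w'}" using h(1) by simp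
        then show False using h(3) by blast
      qed
    qed
    show ?thesis unfolding e by (rule card_image[OF inj])
  qed
  define Q where "Q = N - P"
  have fP: "finite P" using finite_subset[OF PN fN] .
  have cQ: "card Q = 3" unfolding Q_def using card_Diff_subset[OF fP PN] cN cP by simp
  then obtain q0 where q0: "q0 \<in> Q" by (metis card.empty empty_iff ex_in_conv zero_neq_numeral)
  have q0N: "q0 \<in> N" "q0 \<notin> P" using q0 unfolding Q_def by auto
  define C1 where "C1 = {w\<in>N. w \<noteq> q0 \<and> N - {q0,w} \<in> U}"
  have cC1: "card C1 = 4" using F2[OF q0N(1)] rQ q0 unfolding C1_def Q_def by simp
  have C1N: "C1 \<subseteq> N" "q0 \<notin> C1" unfolding C1_def by auto
  have fC1: "finite C1" using finite_subset[OF C1N(1) fN] .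
  have nbr: "{w\<in>N. w \<noteq> u \<and> N - {u,w} \<in> U} = N - C1" if uC: "u \<in> C1" for u
  proof (rule set_eqI)
    fix w
    have uN: "u \<in> N" "u \<noteq> q0" "N - {q0,u} \<in> U" using uC unfolding C1_def by auto
    show "w \<in> {w\<in>N. w \<noteq> u \<and> N - {u,w} \<in> U} \<longleftrightarrow> w \<in> N - C1"
    proof (cases "w \<in> N")
      case False then show ?thesis by simp
    next
      case wN: True
      show ?thesis
      proof (cases "w = u")
        case True then show ?thesis using uC by simp
      next
        case wu: False
        show ?thesis
        proof (cases "w = q0")
          case True
          have "{u,q0} = {q0,u}" by blast
          then show ?thesis using True uN C1N wN wu by simp
        next
          case wq: False
          have "(N - {u,w} \<in> U) \<longleftrightarrow> \<not> ((N - {q0,u} \<in> U) \<longleftrightarrow> (N - {q0,w} \<in> U))"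
            using F1[OF q0N(1) uN(1) wN uN(2)[symmetric]] wq wu by (simp add: eq_commute)
          then show ?thesis using uN(3) wN wu wq unfolding C1_def by auto
        qed
      qed
    qed
  qed
  have C1P: "C1 \<subseteq> P"
  proof
    fix u assume uC: "u \<in> C1"
    have uN: "u \<in> N" using uC C1N by blast
    have "card (res U u) = card (N - C1)" using F2[OF uN] nbr[OF uC] by simp
    also have "\<dots> = 3" using card_Diff_subset[OF fC1 C1N(1)] cN cC1 by simp
    finally have "card (res U u) = 3" .
    then show "u \<in> P" using rQ[of u] uN by (cases "u \<in> P") auto
  qed
  have C1eP: "C1 = P" using card_subset_eq[OF fP C1P] cC1 cP by simp
  have edge: "(N - {u,w} \<in> U) \<longleftrightarrow> (u \<in> P \<longleftrightarrow> w \<notin> P)"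
    if uw: "u \<in> N" "w \<in> N" "u \<noteq> w" for u w
  proof -
    have sym: "\<And>a b. {a,b} = {b,a}" by blast
    have q0e: "(N - {q0,w} \<in> U) \<longleftrightarrow> w \<in> P" if "w \<in> N" "w \<noteq> q0" for w
      using that C1eP unfolding C1_def by blast
    show ?thesis
    proof (cases "u = q0")
      case True then show ?thesis using q0e[of w] uw q0N by auto
    next
      case uq: False
      show ?thesis
      proof (cases "w = q0")
        case True then show ?thesis using q0e[of u] uw q0N sym[of u w] by auto
      next
        case wq: False
        have "(N - {u,w} \<in> U) \<longleftrightarrow> \<not> ((N - {q0,u} \<in> U) \<longleftrightarrow> (N - {q0,w} \<in> U))"
          using F1[OF q0N(1) uw(1) uw(2)] uq wq uw(3) by (simp add: eq_commute)
        then show ?thesis using q0e[of u] q0e[of w] uw uq wq by auto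
      qed
    qed
  qed
  show ?thesis
  proof (rule set_eqI, rule iffI)
    fix b assume b: "b \<in> U"
    have "card (N - b) = Suc (Suc 0)" using cNb[OF b] by simp
    then obtain u w where uw: "N - b = {u,w}" "u \<noteq> w" by (metis card_2_iff numeral_2_eq_2)
    have uwN: "u \<in> N" "w \<in> N" using uw by auto
    have bb: "b = N - {u,w}" using N_b[OF b] uw by simp
    have e: "u \<in> P \<longleftrightarrow> w \<notin> P" using edge[OF uwN uw(2)] b bb by simp
    show "b \<in> (\<lambda>(p,q). N - {p,q}) ` (P \<times> (N - P))"
    proof (cases "u \<in> P")
      case True
      then have m: "(u, w) \<in> P \<times> (N - P)" using e uwN by simp
      show ?thesis using bb rev_image_eqI[OF m, of b "\<lambda>(p,q). N - {p,q}"] by simp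
    next
      case False
      then have m: "(w, u) \<in> P \<times> (N - P)" using e uwN by simp
      have "b = N - {w,u}" using bb by (simp add: insert_commute)
      then show ?thesis using rev_image_eqI[OF m, of b "\<lambda>(p,q). N - {p,q}"] by simp
    qed
  next
    fix b assume "b \<in> (\<lambda>(p,q). N - {p,q}) ` (P \<times> (N - P))"
    then obtain p q where pq: "p \<in> P" "q \<in> N - P" "b = N - {p,q}" by blast
    have "p \<in> N" "q \<in> N" "p \<noteq> q" using pq PN by auto
    then show "b \<in> U" using edge[of p q] pq by simp
  qed
qed

lemma S_alt: "S_trade = (\<lambda>(i,j). {1..7::nat} - {i,j}) ` ({1..4} \<times> {5..7})"
proof -
  have a: "{1..4::nat} = {1,2,3,4}" "{5..7::nat} = {5,6,7}" by auto
  have b: "{Suc 0..7::nat} - {Suc 0,5} = {2,3,4,6,7}" "{Suc 0..7::nat} - {Suc 0,6} = {2,3,4,5,7}" "{Suc 0..7::nat} - {Suc 0,7} = {2,3,4,5,6}" "{Suc 0..7::nat} - {2,5} = {Suc 0,3,4,6,7}" "{Suc 0..7::nat} - {2,6} = {Suc 0,3,4,5,7}" "{Suc 0..7::nat} - {2,7} = {Suc 0,3,4,5,6}" "{Suc 0..7::nat} - {3,5} = {Suc 0,2,4,6,7}" "{Suc 0..7::nat} - {3,6} = {Suc 0,2,4,5,7}" "{Suc 0..7::nat} - {3,7} = {Suc 0,2,4,5,6}" "{Suc 0..7::nat} - {4,5} = {Suc 0,2,3,6,7}" "{Suc 0..7::nat} - {4,6} = {Suc 0,2,3,5,7}" "{Suc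 0..7::nat} - {4,7} = {Suc 0,2,3,5,6}" by auto
  show ?thesis unfolding S_trade_def a by (simp add: b insert_commute)
qed

lemma S_equiv:
  assumes PQ: "P \<inter> Q = {}" and cP: "card P = 4" and cQ: "card Q = 3" and NV: "P \<union> Q \<subseteq> V"
    and U: "U = (\<lambda>(p,q). (P \<union> Q) - {p,q}) ` (P \<times> Q)"
  shows "equivalent {1..7::nat} S_trade V U"
proof -
  have fP: "finite P" using cP by (metis card.infinite zero_neq_numeral)
  have fQ: "finite Q" using cQ by (metis card.infinite zero_neq_numeral)
  have "card {1..4::nat} = card P" using cP by simp
  then obtain g1 where g1: "bij_betw g1 {1..4::nat} P" using finite_same_card_bij[OF finite_atLeastAtMost fP] by blast
  have "card {5..7::nat} = card Q" using cQ by simp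
  then obtain g2 where g2: "bij_betw g2 {5..7::nat} Q" using finite_same_card_bij[OF finite_atLeastAtMost fQ] by blast
  define f where "f i = (if i \<le> 4 then g1 i else g2 i)" for i :: nat
  have f1: "f i = g1 i" if "i \<in> {1..4}" for i using that unfolding f_def by simp
  have f2: "f i = g2 i" if "i \<in> {5..7}" for i using that unfolding f_def by simp
  have im1: "f ` {1..4} = P" using g1 f1 unfolding bij_betw_def by (metis image_cong)
  have im2: "f ` {5..7} = Q" using g2 f2 unfolding bij_betw_def by (metis image_cong)
  have split: "{1..7::nat} = {1..4} \<union> {5..7}" by auto
  have imf: "f ` {1..7} = P \<union> Q" unfolding split image_Un im1 im2 ..
  have inj1: "inj_on g1 {1..4}" using bij_betw_imp_inj_on[OF g1] .
  have inj2: "inj_on g2 {5..7}" using bij_betw_imp_inj_on[OF g2] .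
  have inj: "inj_on f {1..7}"
  proof (rule inj_onI)
    fix i j :: nat assume i: "i \<in> {1..7}" and j: "j \<in> {1..7}" and e: "f i = f j"
    have ci: "i \<in> {1..4} \<or> i \<in> {5..7}" using i by auto
    have cj: "j \<in> {1..4} \<or> j \<in> {5..7}" using j by auto
    show "i = j"
    proof (cases "i \<in> {1..4}")
      case iT: True
      show ?thesis
      proof (cases "j \<in> {1..4}")
        case True
        have "g1 i = g1 j" using e f1[OF iT] f1[OF True] by simp
        then show ?thesis using inj_onD[OF inj1 _ iT True] by simp
      next
        case False
        then have jT: "j \<in> {5..7}" using False cj by auto
        have "f i \<in> P" unfolding im1[symmetric] using iT by (rule imageI)
        moreover have "f j \<in> Q" unfolding im2[symmetric] using jT by (rule imageI)
        ultimately show ?thesis using e PQ by (simp add: disjoint_iff)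
      qed
    next
      case False
      then have iT: "i \<in> {5..7}" using False ci by auto
      show ?thesis
      proof (cases "j \<in> {1..4}")
        case True
        have "f i \<in> Q" unfolding im2[symmetric] using iT by (rule imageI)
        moreover have "f j \<in> P" unfolding im1[symmetric] using True by (rule imageI)
        ultimately show ?thesis using e PQ by (simp add: disjoint_iff)
      next
        case False
        then have jT: "j \<in> {5..7}" using False cj by auto
        have "g2 i = g2 j" using e f2[OF iT] f2[OF jT] by simp
        then show ?thesis using inj_onD[OF inj2 _ iT jT] by simp
      qed
    qed
  qed
  have "(\<lambda>u. f ` u) ` S_trade = U"
  proof -
    have "(\<lambda>u. f ` u) ` S_trade = (\<lambda>(i,j). f ` ({1..7} - {i,j})) ` ({1..4} \<times> {5..7})"
      unfolding S_alt image_image by (simp add: case_prod_beta)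
    also have "\<dots> = (\<lambda>(i,j). (P \<union> Q) - {f i, f j}) ` ({1..4} \<times> {5..7})"
    proof (rule image_cong[OF refl])
      fix ij assume ij: "ij \<in> {1..4::nat} \<times> {5..7::nat}"
      obtain i j where "ij = (i,j)" by fastforce
      then have ijs: "ij = (i,j)" "{i,j} \<subseteq> {1..7}" using ij by auto
      have "f ` ({1..7} - {i,j}) = f ` {1..7} - f ` {i,j}"
        by (rule inj_on_image_set_diff[OF inj]) (use ijs in auto)
      then show "(\<lambda>(i,j). f ` ({1..7} - {i,j})) ij = (\<lambda>(i,j). (P \<union> Q) - {f i, f j}) ij"
        using ijs imf by simp
    qed
    also have "\<dots> = U"
    proof (rule set_eqI, rule iffI)
      fix b assume "b \<in> (\<lambda>(i,j). (P \<union> Q) - {f i, f j}) ` ({1..4} \<times> {5..7})"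
      then obtain i j where ij: "i \<in> {1..4}" "j \<in> {5..7}" "b = (P \<union> Q) - {f i, f j}" by blast
      have m: "(f i, f j) \<in> P \<times> Q" using ij im1 im2 by blast
      show "b \<in> U" unfolding U using rev_image_eqI[OF m, of b "\<lambda>(p,q). (P \<union> Q) - {p,q}"] ij by simp
    next
      fix b assume "b \<in> U"
      then obtain p q where pq: "p \<in> P" "q \<in> Q" "b = (P \<union> Q) - {p,q}" unfolding U by blast
      obtain i where i: "i \<in> {1..4}" "p = f i" using pq im1 by blast
      obtain j where j: "j \<in> {5..7}" "q = f j" using pq im2 by blast
      have m: "(i, j) \<in> {1..4::nat} \<times> {5..7::nat}" using i j by simp
      show "b \<in> (\<lambda>(i,j). (P \<union> Q) - {f i, f j}) ` ({1..4} \<times> {5..7})"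
        using rev_image_eqI[OF m, of b "\<lambda>(i,j). (P \<union> Q) - {f i, f j}"] pq i j by simp
    qed
    finally show ?thesis .
  qed
  then show ?thesis unfolding equivalent_def using inj imf NV by blast
qed

lemma arith_pq:
  fixes n p :: nat
  assumes "(n - p) * 8 + p * 9 = 60" "p \<le> n"
  shows "p = 4 \<and> n = 7"
proof -
  obtain q where q: "n = p + q" using assms(2) le_Suc_ex by blast
  then have e: "q * 8 + p * 9 = 60" using assms(1) by simp
  then have "p \<le> 6" by linarith
  then have "p \<in> {0,1,2,3,4,5,6}" by auto
  then show ?thesis using e q by (auto; presburger)
qed

theorem proposition14:
  fixes V :: "'a set" and U :: "'a set set"
  assumes "unitrade 5 V U" and "card U = 12"
  shows "(\<exists>W W'. unitrade 5 V W \<and> unitrade 5 V W' \<and> W \<inter> W' = {} \<and> U = W \<union> W' \<and>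
            equivalent {1..6} W5 V W \<and> equivalent {1..6} W5 V W')
         \<or> equivalent {1..7} S_trade V U"
proof (cases "case1 V U")
  case True
  then have "\<exists>W W'. unitrade 5 V W \<and> unitrade 5 V W' \<and> W \<inter> W' = {} \<and> U = W \<union> W' \<and>
            equivalent {1..6} W5 V W \<and> equivalent {1..6} W5 V W'" unfolding case1_def .
  then show ?thesis by (rule disjI1)
next
  case False
  note u = assms(1) and c12 = assms(2)
  have fU: "finite U" using unitrade_finite[OF u] .
  have fV: "finite V" using unitrade_finV[OF u] .
  define N where "N = \<Union>U"
  have NV: "N \<subseteq> V" unfolding N_def using unitrade_blk[OF u] by blast
  have fN: "finite N" using finite_subset[OF NV fV] .
  have rr: "card (res U x) = 3 \<or> card (res U x) = 4" if xN: "x \<in> N" for x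
  proof -
    obtain b where b: "b \<in> U" "x \<in> b" using xN unfolding N_def by blast
    have "x \<in> V" using xN NV by blast
    have "case1 V U \<or> card (res U x) = 3 \<or> card (res U x) = 4" by (rule vertex[OF u c12 b \<open>x \<in> V\<close>])
    then show ?thesis using False by simp
  qed
  have deg: "card {b\<in>U. x\<in>b} = 12 - card (res U x)" for x
    using card_split[OF fU, of x] c12 by simp
  define P where "P = {x\<in>N. card (res U x) = 3}"
  have PN: "P \<subseteq> N" unfolding P_def by blast
  have fP: "finite P" using finite_subset[OF PN fN] .
  have rP: "card (res U x) = 3" if "x \<in> P" for x using that unfolding P_def by simp
  have rQ: "card (res U x) = 4" if "x \<in> N - P" for x
  proof -
    have "x \<in> N" "card (res U x) \<noteq> 3" using that unfolding P_def by auto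
    then show ?thesis using rr[of x] by simp
  qed
  have "(\<Sum>x\<in>N. card {b\<in>U. x\<in>b}) = (\<Sum>b\<in>U. card b)"
    by (rule dbl[OF fU fN]) (auto simp: N_def)
  also have "\<dots> = (\<Sum>b\<in>U. 5)" by (rule sum.cong) (use unitrade_blk[OF u] in auto)
  also have "\<dots> = 60" using c12 by simp
  finally have s60: "(\<Sum>x\<in>N. card {b\<in>U. x\<in>b}) = 60" .
  have "(\<Sum>x\<in>N. card {b\<in>U. x\<in>b}) = (\<Sum>x\<in>N - P. card {b\<in>U. x\<in>b}) + (\<Sum>x\<in>P. card {b\<in>U. x\<in>b})"
    by (rule sum.subset_diff[OF PN fN])
  also have "(\<Sum>x\<in>N - P. card {b\<in>U. x\<in>b}) = (\<Sum>x\<in>N - P. 8)"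
    by (rule sum.cong) (simp_all add: deg rQ)
  also have "(\<Sum>x\<in>P. card {b\<in>U. x\<in>b}) = (\<Sum>x\<in>P. 9)"
    by (rule sum.cong) (simp_all add: deg rP)
  finally have "card (N - P) * 8 + card P * 9 = 60" using s60 by simp
  moreover have "card (N - P) = card N - card P" using card_Diff_subset[OF fP PN] .
  moreover have "card P \<le> card N" using card_mono[OF fN PN] .
  ultimately have cP: "card P = 4" and cN: "card N = 7" using arith_pq[of "card N" "card P"] by auto
  have UU: "U = (\<lambda>(p,q). N - {p,q}) ` (P \<times> (N - P))"
    by (rule graph_part[OF u N_def cN PN cP rP rQ])
  have cQ: "card (N - P) = 3" using card_Diff_subset[OF fP PN] cN cP by simp
  have PQN: "P \<union> (N - P) = N" using PN by blast
  have "equivalent {1..7::nat} S_trade V U"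
    by (rule S_equiv[of P "N - P"]) (use cP cQ NV PQN UU in auto)
  then show ?thesis by simp
qed

end
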